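(* Let $h:\mathbb{R}\to\mathbb{R}$ be a smooth function with $h(T)=\pi/2$ for $T\le 0$, $0<h(T)<\pi/2$ for $0<T<1$, and $h(T)=0$ for $T\ge 1$. For $0<x<1$ let $g(x)=\tan\bigl(h(x)\bigr)$, and for $0\le x<1$ let $B(x)=\exp\left(\int_0^x \cot\bigl(h(z)\bigr)\,dz\right)$. Assume $g'''(x)<0$ for all $0<x<1$. Fix $\kappa\in(0,1)$ and define, for $\kappa<x<1$, $$\mathcal{D}(x)=\frac{1}{B(x)}\int_\kappa^{x} B'(z)\,\frac{\cos(x-z)}{x-z}\left(\frac{g(x)-g(z)}{x-z}-g'(x)\right)dz .$$ Then $\lim_{x\to 1_-}\mathcal{D}(x)=0$.
   Context: (In the paper the variable $x$ appears as $y+A$, and $\alpha=x-z$.) *)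

theory Defs
  imports "HOL-Analysis.Analysis"
begin

definition smooth_real :: "(real \<Rightarrow> real) \<Rightarrow> bool" where
  "smooth_real f \<longleftrightarrow> (\<forall>n x. ((deriv ^^ n) f) differentiable (at x))"

end

theory Submission
  imports Defs "HOL-Real_Asymp.Real_Asymp"
begin


lemma taylor_bound:
  fixes G G1 G2 :: "real \<Rightarrow> real"
  assumes zx: "z \<le> x"
    and d1: "\<And>t. z \<le> t \<Longrightarrow> t \<le> x \<Longrightarrow> (G has_real_derivative G1 t) (at t)"
    and d2: "\<And>t. z \<le> t \<Longrightarrow> t \<le> x \<Longrightarrow> (G1 has_real_derivative G2 t) (at t)"
    and bd: "\<And>t. z \<le> t \<Longrightarrow> t \<le> x \<Longrightarrow> \<bar>G2 t\<bar> \<le> K"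
  shows "\<bar>((G x - G z) / (x - z) - G1 x) / (x - z)\<bar> \<le> K"
proof (cases "z = x")
  case True
  then show ?thesis using bd[of x] zx by auto
next
  case False
  then have zx': "z < x" using zx by auto
  have g1b: "\<bar>G1 t - G1 x\<bar> \<le> K * (x - z)" if "z \<le> t" "t \<le> x" for t
  proof (cases "t = x")
    case True then show ?thesis using bd[of x] zx by auto
  next
    case False
    then have "t < x" using that by auto
    have dd: "\<And>u. t \<le> u \<Longrightarrow> u \<le> x \<Longrightarrow> (G1 has_real_derivative G2 u) (at u)"
      using d2 that by auto
    from MVT2[OF \<open>t < x\<close> dd] obtain \<xi> where xi: "t < \<xi>" "\<xi> < x" "G1 x - G1 t = (x - t) * G2 \<xi>"
      by blast
    have "\<bar>G1 t - G1 x\<bar> = \<bar>(x - t) * G2 \<xi>\<bar>" using xi(3) by (metis abs_minus_commute)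
    also have "\<dots> = (x - t) * \<bar>G2 \<xi>\<bar>" using xi \<open>t < x\<close> by (simp add: abs_mult)
    also have "\<dots> \<le> (x - z) * K"
      using bd[of \<xi>] xi that by (intro mult_mono) auto
    finally show ?thesis by (simp add: mult.commute)
  qed
  define \<psi> where "\<psi> t = G t - G x - G1 x * (t - x)" for t
  have dpsi: "(\<psi> has_real_derivative (G1 t - G1 x)) (at t)" if "z \<le> t" "t \<le> x" for t
    unfolding \<psi>_def using d1[OF that] by (auto intro!: derivative_eq_intros)
  from MVT2[OF zx', of \<psi> "\<lambda>t. G1 t - G1 x"] obtain \<eta> where eta:
    "z < \<eta>" "\<eta> < x" "\<psi> x - \<psi> z = (x - z) * (G1 \<eta> - G1 x)"
    using dpsi by blast
  have "\<psi> x = 0" by (simp add: \<psi>_def)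
  then have "\<bar>\<psi> z\<bar> = \<bar>(x - z) * (G1 \<eta> - G1 x)\<bar>" using eta(3) by (metis abs_minus_commute diff_zero diff_0)
  also have "\<dots> = (x - z) * \<bar>G1 \<eta> - G1 x\<bar>" using zx' by (simp add: abs_mult)
  also have "\<dots> \<le> (x - z) * (K * (x - z))"
    using g1b[of \<eta>] eta by (intro mult_left_mono) auto
  finally have psib: "\<bar>\<psi> z\<bar> \<le> K * (x - z)^2" by (simp add: power2_eq_square algebra_simps)
  have eq: "((G x - G z) / (x - z) - G1 x) / (x - z) = - \<psi> z / (x - z)^2"
    using zx' by (simp add: \<psi>_def field_simps power2_eq_square)
  show ?thesis unfolding eq using psib zx' by (simp add: divide_le_eq abs_minus_cancel)
qed



lemma cot_lower:
  fixes u :: real assumes "0 < u" "u \<le> 1" shows "1 / (2 * u) \<le> cot u"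
proof -
  have "u \<le> pi / 3" using assms pi_gt3 by linarith
  then have c: "1/2 \<le> cos u" using cos_monotone_0_pi_le[of u "pi/3"] cos_60 assms by auto
  have s0: "0 < sin u" using assms pi_gt3 by (intro sin_gt_zero) auto
  have s1: "sin u \<le> u" using sin_x_le_x assms by auto
  have "1 / (2 * u) \<le> (1/2) / sin u" using s0 s1 by (simp add: frac_le)
  also have "\<dots> \<le> cos u / sin u" using c s0 by (intro divide_right_mono) auto
  finally show ?thesis by (simp add: cot_def)
qed

lemma ln_lim:
  fixes L C E :: real assumes "L > 0"
  shows "filterlim (\<lambda>x. C + (E - ln (1 - x)) / (2 * L)) at_top (at_left 1)"
proof -
  have a: "filterlim (\<lambda>x::real. - ln (1 - x)) at_top (at_left 1)" by real_asymp
  have b: "filterlim (\<lambda>x::real. (1/(2*L)) * (- ln (1 - x))) at_top (at_left 1)"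
    by (rule filterlim_tendsto_pos_mult_at_top[OF tendsto_const _ a]) (use assms in auto)
  have c: "filterlim (\<lambda>x::real. (C + E/(2*L)) + (1/(2*L)) * (- ln (1 - x))) at_top (at_left 1)"
    by (rule filterlim_tendsto_add_at_top[OF tendsto_const b])
  show ?thesis using c by (simp add: field_simps diff_divide_distrib add_divide_distrib)
qed


theorem mainTheorem5:
  fixes h g B D :: "real \<Rightarrow> real" and \<kappa> :: real
  assumes smooth: "smooth_real h"
    and h_le0: "\<And>T. T \<le> 0 \<Longrightarrow> h T = pi / 2"
    and h_mid: "\<And>T. 0 < T \<Longrightarrow> T < 1 \<Longrightarrow> 0 < h T \<and> h T < pi / 2"
    and h_ge1: "\<And>T. 1 \<le> T \<Longrightarrow> h T = 0"
    and g_def: "\<And>x. 0 < x \<Longrightarrow> x < 1 \<Longrightarrow> g x = tan (h x)"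
    and B_def: "\<And>x. 0 \<le> x \<Longrightarrow> x < 1 \<Longrightarrow> B x = exp (integral {0..x} (\<lambda>z. cot (h z)))"
    and g3: "\<And>x. 0 < x \<Longrightarrow> x < 1 \<Longrightarrow> (deriv ^^ 3) g x < 0"
    and \<kappa>: "0 < \<kappa>" "\<kappa> < 1"
    and D_def: "\<And>x. \<kappa> < x \<Longrightarrow> x < 1 \<Longrightarrow> D x =
       (1 / B x) * integral {\<kappa>..x} (\<lambda>z. deriv B z * (cos (x - z) / (x - z))
            * ((g x - g z) / (x - z) - deriv g x))"
  shows "(D \<longlongrightarrow> 0) (at_left 1)"
proof -
  define h1 where "h1 = deriv h"
  define h2 where "h2 = deriv h1"
  have dh: "(h has_real_derivative h1 t) (at t)" for t
    using smooth[unfolded smooth_real_def, rule_format, of 0 t]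
    unfolding h1_def by (simp add: DERIV_deriv_iff_real_differentiable)
  have dh1: "(h1 has_real_derivative h2 t) (at t)" for t
    using smooth[unfolded smooth_real_def, rule_format, of 1 t]
    unfolding h2_def h1_def by (simp add: DERIV_deriv_iff_real_differentiable)
  have dh2: "(h2 has_real_derivative deriv h2 t) (at t)" for t
    using smooth[unfolded smooth_real_def, rule_format, of 2 t]
    unfolding h2_def h1_def by (simp add: DERIV_deriv_iff_real_differentiable numeral_2_eq_2)
  have ch: "isCont h t" for t using dh DERIV_isCont by blast
  have ch1: "isCont h1 t" for t using dh1 DERIV_isCont by blast
  have ch2: "isCont h2 t" for t using dh2 DERIV_isCont by blast
  have h1_gt: "h1 t = 0" if "t > 1" for t
  proof -
    have "((\<lambda>_. 0) has_real_derivative 0) (at t)" by simp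
    then have "(h has_real_derivative 0) (at t)"
      by (rule has_field_derivative_transform_within_open[where S="{1<..}"]) (use that h_ge1 in auto)
    then show ?thesis using dh DERIV_unique by blast
  qed
  have h2_gt: "h2 t = 0" if "t > 1" for t
  proof -
    have "((\<lambda>_. 0) has_real_derivative 0) (at t)" by simp
    then have "(h1 has_real_derivative 0) (at t)"
      by (rule has_field_derivative_transform_within_open[where S="{1<..}"]) (use that h1_gt in auto)
    then show ?thesis using dh1 DERIV_unique by blast
  qed
  have lim1: "f 1 = 0" if "isCont f 1" "\<And>t. t > 1 \<Longrightarrow> f t = 0" for f :: "real \<Rightarrow> real"
  proof -
    have "(f \<longlongrightarrow> f 1) (at_right 1)" using that(1) unfolding isCont_def
      by (rule tendsto_within_subset) auto
    moreover have "(f \<longlongrightarrow> 0) (at_right 1)"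
    proof (rule Lim_transform_eventually[OF tendsto_const])
      show "\<forall>\<^sub>F x in at_right 1. 0 = f x" using that(2)
        by (auto simp: eventually_at_right_less eventually_at_right_field intro: exI[of _ 2])
    qed
    ultimately show ?thesis using tendsto_unique[OF trivial_limit_at_right_real] by blast
  qed
  have h1_1: "h1 1 = 0" using lim1[OF ch1 h1_gt] .
  have h2_1: "h2 1 = 0" using lim1[OF ch2 h2_gt] .
  have hpos: "0 \<le> h t \<and> h t < pi/2" if "t > 0" for t
    using h_mid[of t] h_ge1[of t] that pi_gt_zero by (cases "t < 1") auto
  have cospos: "cos (h t) > 0" if "t > 0" for t
    using hpos[OF that] by (intro cos_gt_zero_pi) auto
  define G where "G t = tan (h t)" for t
  define G1 where "G1 t = h1 t / (cos (h t))^2" for t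
  define G2 where "G2 t = h2 t / (cos (h t))^2 + 2 * (h1 t)^2 * sin (h t) / (cos (h t))^3" for t
  have dG: "(G has_real_derivative G1 t) (at t)" if "t > 0" for t
    unfolding G_def G1_def using cospos[OF that]
    by (auto intro!: derivative_eq_intros dh simp: field_simps)
  have dG1: "(G1 has_real_derivative G2 t) (at t)" if "t > 0" for t
    unfolding G1_def G2_def using cospos[OF that]
    by (auto intro!: derivative_eq_intros dh dh1 simp: field_simps power2_eq_square power3_eq_cube)
  have cG2: "isCont G2 t" if "t > 0" for t
    unfolding G2_def using cospos[OF that]
    by (auto intro!: continuous_intros ch ch1 ch2)
  have G2_1: "G2 1 = 0" by (simp add: G2_def h1_1 h2_1)
  define c where "c = (\<lambda>t. cot (h t))"
  define I where "I x = integral {0..x} c" for x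
  have BI: "B x = exp (I x)" if "0 \<le> x" "x < 1" for x
    using B_def[OF that] by (simp add: I_def c_def)
  have sinpos: "sin (h t) > 0" if "0 \<le> t" "t < 1" for t
  proof (cases "t = 0")
    case True then have "h t = pi/2" using h_le0 by simp
    then show ?thesis by (metis sin_pi_half zero_less_one)
  next
    case False then show ?thesis using h_mid[of t] that by (intro sin_gt_zero) auto
  qed
  have cpos: "c t > 0" if "0 < t" "t < 1" for t
    using h_mid[of t] that unfolding c_def by (intro cot_gt_zero) auto
  have cc: "continuous_on {0..b} c" if "b < 1" for b
  proof -
    have "isCont c t" if "t \<in> {0..b}" for t
      unfolding c_def cot_def using sinpos[of t] that \<open>b < 1\<close>
      by (auto intro!: continuous_intros ch)
    then show ?thesis by (simp add: continuous_at_imp_continuous_on)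
  qed
  have dI: "(I has_real_derivative c z) (at z)" if "0 < z" "z < 1" for z
  proof -
    define b where "b = (z + 1) / 2"
    have b: "z < b" "b < 1" using that by (auto simp: b_def)
    have "(I has_vector_derivative c z) (at z within {0..b})"
      unfolding I_def using integral_has_vector_derivative[OF cc[OF b(2)], of z] b that by auto
    then have "(I has_vector_derivative c z) (at z within {0<..<b})"
      by (rule has_vector_derivative_within_subset) auto
    then have "(I has_vector_derivative c z) (at z)"
      using at_within_open[of z "{0<..<b}"] b that by auto
    then show ?thesis by (simp add: has_real_derivative_iff_has_vector_derivative)
  qed
  have dB: "(B has_real_derivative B z * c z) (at z)" if "0 < z" "z < 1" for z
  proof -
    have "((\<lambda>x. exp (I x)) has_real_derivative exp (I z) * c z) (at z)"
      by (auto intro!: derivative_eq_intros dI that)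
    then have "(B has_real_derivative exp (I z) * c z) (at z)"
      by (rule has_field_derivative_transform_within_open[where S="{0<..<1}"]) (use that BI in auto)
    then show ?thesis using BI that by simp
  qed
  have derB: "deriv B z = B z * c z" if "0 < z" "z < 1" for z
    using dB[OF that] by (rule DERIV_imp_deriv)
  have Bpos: "B x > 0" if "0 \<le> x" "x < 1" for x using BI[OF that] by simp
  have derB_nn: "deriv B z \<ge> 0" if "0 < z" "z < 1" for z
    using derB[OF that] Bpos[of z] cpos[OF that] that by simp
  have Bint: "((\<lambda>z. deriv B z) has_integral (B b - B a)) {a..b}" if "0 < a" "a \<le> b" "b < 1" for a b
  proof (rule fundamental_theorem_of_calculus[OF that(2)])
    fix z assume z: "z \<in> {a..b}"
    then have "(B has_real_derivative deriv B z) (at z)"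
      using dB[of z] derB[of z] that by auto
    then show "(B has_vector_derivative deriv B z) (at z within {a..b})"
      by (simp add: has_real_derivative_iff_has_vector_derivative has_vector_derivative_at_within)
  qed
  have Bmono: "B a \<le> B b" if "0 < a" "a \<le> b" "b < 1" for a b
    using has_integral_nonneg[OF Bint[OF that]] derB_nn that by auto
  have "continuous_on {\<kappa>..1} G2"
    using cG2 \<kappa> by (intro continuous_at_imp_continuous_on) auto
  then have "bounded (G2 ` {\<kappa>..1})" by (intro compact_imp_bounded compact_continuous_image) auto
  then obtain M where M: "M > 0" "\<And>t. t \<in> {\<kappa>..1} \<Longrightarrow> \<bar>G2 t\<bar> \<le> M"
    unfolding bounded_pos by auto
  have "continuous_on {0..1} h1" using ch1 by (intro continuous_at_imp_continuous_on) auto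
  then have "bounded (h1 ` {0..1})" by (intro compact_imp_bounded compact_continuous_image) auto
  then obtain L0 where L0: "L0 > 0" "\<And>t. t \<in> {0..1} \<Longrightarrow> \<bar>h1 t\<bar> \<le> L0"
    unfolding bounded_pos by auto
  define L where "L = L0 + 1"
  have L1: "L \<ge> 1" using L0 by (simp add: L_def)
  have hlip: "h z \<le> L * (1 - z)" if "0 \<le> z" "z < 1" for z
  proof -
    have dd: "\<And>u. z \<le> u \<Longrightarrow> u \<le> 1 \<Longrightarrow> (h has_real_derivative h1 u) (at u)" using dh by auto
    from MVT2[OF \<open>z < 1\<close> dd] obtain \<xi> where xi: "z < \<xi>" "\<xi> < 1" "h 1 - h z = (1 - z) * h1 \<xi>"
      by blast
    have "h z = (1 - z) * (- h1 \<xi>)" using xi h_ge1[of 1] by simp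
    also have "\<dots> \<le> (1 - z) * L"
      using L0(2)[of \<xi>] xi that by (intro mult_left_mono) (auto simp: L_def)
    finally show ?thesis by (simp add: mult.commute)
  qed
  define a where "a = 1 - 1 / (2 * L)"
  have a: "0 < a" "a < 1" using L1 by (auto simp: a_def field_simps)
  have clow: "1 / (2 * L * (1 - z)) \<le> c z" if "a \<le> z" "z < 1" for z
  proof -
    have hz: "0 < h z" using h_mid[of z] a that by auto
    have "1 - z \<le> 1 / (2 * L)" using that by (simp add: a_def)
    then have "L * (1 - z) \<le> 1/2" using L1 by (simp add: field_simps)
    then have hz1: "h z \<le> 1" using hlip[of z] a that by auto
    have "1 / (2 * L * (1 - z)) \<le> 1 / (2 * h z)"
      using hz hlip[of z] a that L1 by (intro divide_left_mono) auto
    also have "\<dots> \<le> c z" unfolding c_def using cot_lower[OF hz hz1] by simp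
    finally show ?thesis .
  qed
  have Ilow: "I a + (ln (1 - a) - ln (1 - x)) / (2 * L) \<le> I x" if "a < x" "x < 1" for x
  proof -
    have ci: "c integrable_on {0..x}" using cc[OF that(2)] by (rule integrable_continuous_real)
    have comb: "I a + integral {a..x} c = I x"
      unfolding I_def using Henstock_Kurzweil_Integration.integral_combine[OF _ _ ci, of a] a that by auto
    have fi: "((\<lambda>z. 1 / (2 * L * (1 - z))) has_integral
        ((- ln (1 - x) / (2 * L)) - (- ln (1 - a) / (2 * L)))) {a..x}"
    proof (rule fundamental_theorem_of_calculus)
      show "a \<le> x" using that by simp
      fix z assume z: "z \<in> {a..x}"
      then have "z < 1" using that by auto
      then have "((\<lambda>z. - ln (1 - z) / (2 * L)) has_real_derivative 1 / (2 * L * (1 - z))) (at z)"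
        using L1 by (auto intro!: derivative_eq_intros simp: field_simps)
      then show "((\<lambda>z. - ln (1 - z) / (2 * L)) has_vector_derivative 1 / (2 * L * (1 - z))) (at z within {a..x})"
        by (simp add: has_real_derivative_iff_has_vector_derivative has_vector_derivative_at_within)
    qed
    have "((- ln (1 - x) / (2 * L)) - (- ln (1 - a) / (2 * L))) \<le> integral {a..x} c"
      using has_integral_le[OF fi integrable_integral[OF integrable_subinterval_real[OF ci, of a x]]]
        clow that a by auto
    then show ?thesis using comb by (simp add: field_simps diff_divide_distrib)
  qed
  have Ilim: "filterlim I at_top (at_left 1)"
  proof (rule filterlim_at_top_mono[OF ln_lim[of L "I a" "ln (1 - a)"]])
    show "0 < L" using L1 by simp
    show "\<forall>\<^sub>F x in at_left 1. I a + (ln (1 - a) - ln (1 - x)) / (2 * L) \<le> I x"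
      using eventually_at_left_real[OF a(2)] by eventually_elim (use Ilow in auto)
  qed
  have Blim: "filterlim B at_top (at_left 1)"
  proof (rule filterlim_at_top_mono[OF filterlim_compose[OF exp_at_top Ilim]])
    show "\<forall>\<^sub>F x in at_left 1. exp (I x) \<le> B x"
      using eventually_at_left_real[OF zero_less_one] by eventually_elim (use BI in auto)
  qed
  have BintK: "((\<lambda>z. K * deriv B z) has_integral K * (B b - B a)) {a..b}"
    if "0 < a" "a \<le> b" "b < 1" for a b K
    using has_integral_mult_right[OF Bint[OF that]] .
  define F where "F = (\<lambda>x z. deriv B z * (cos (x - z) / (x - z)) * ((g x - g z) / (x - z) - deriv g x))"
  have DF: "D x = (1 / B x) * integral {\<kappa>..x} (F x)" if "\<kappa> < x" "x < 1" for x
    using D_def[OF that] by (simp add: F_def)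
  have pw: "\<bar>F x z\<bar> \<le> deriv B z * K"
    if zx: "\<kappa> \<le> z" "z \<le> x" "x < 1" and K: "\<And>t. z \<le> t \<Longrightarrow> t \<le> x \<Longrightarrow> \<bar>G2 t\<bar> \<le> K" for x z K
  proof -
    have tb: "\<bar>((G x - G z) / (x - z) - G1 x) / (x - z)\<bar> \<le> K"
      by (rule taylor_bound[OF zx(2)]) (use dG dG1 K zx \<kappa> in auto)
    have gx: "g x = G x" "g z = G z" using g_def zx \<kappa> by (auto simp: G_def)
    have "(g has_real_derivative G1 x) (at x)"
      by (rule has_field_derivative_transform_within_open[OF dG, where S="{0<..<1}"])
         (use zx \<kappa> g_def in \<open>auto simp: G_def\<close>)
    then have dgx: "deriv g x = G1 x" by (rule DERIV_imp_deriv)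
    have eq: "F x z = deriv B z * (cos (x - z) * (((G x - G z) / (x - z) - G1 x) / (x - z)))"
      by (simp add: F_def gx dgx)
    define w where "w = cos (x - z) * (((G x - G z) / (x - z) - G1 x) / (x - z))"
    have "\<bar>w\<bar> \<le> 1 * K"
      unfolding w_def abs_mult by (intro mult_mono tb) auto
    moreover have "deriv B z \<ge> 0" using derB_nn zx \<kappa> by auto
    ultimately have "deriv B z * \<bar>w\<bar> \<le> deriv B z * K" by (simp add: mult_left_mono)
    moreover have "\<bar>F x z\<bar> = deriv B z * \<bar>w\<bar>" using \<open>deriv B z \<ge> 0\<close>
      unfolding eq w_def by (simp add: abs_mult)
    ultimately show ?thesis by simp
  qed
  show ?thesis
  proof (rule tendstoI)
    fix \<epsilon> :: real assume e: "\<epsilon> > 0"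
    then have "\<epsilon> / 2 > 0" by simp
    have "\<exists>\<delta>>0. \<forall>t. dist t 1 < \<delta> \<longrightarrow> dist (G2 t) (G2 1) < \<epsilon> / 2"
      using cG2[OF zero_less_one] \<open>\<epsilon> / 2 > 0\<close> unfolding continuous_at_eps_delta by blast
    then obtain \<delta> where d: "\<delta> > 0" "\<And>t. dist t 1 < \<delta> \<Longrightarrow> dist (G2 t) (G2 1) < \<epsilon> / 2"
      by blast
    define y where "y = max ((\<kappa> + 1) / 2) (1 - \<delta> / 2)"
    have y: "\<kappa> < y" "y < 1" using \<kappa> d(1) unfolding y_def by (auto simp: less_max_iff_disj)
    have G2y: "\<bar>G2 t\<bar> \<le> \<epsilon> / 2" if "y \<le> t" "t \<le> 1" for t
      using d(2)[of t] that G2_1 d(1) by (auto simp: y_def dist_real_def)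
    define C where "C = 2 * M * (B y - B \<kappa>) / \<epsilon>"
    have "\<forall>\<^sub>F x in at_left 1. C + 1 \<le> B x" using Blim by (simp add: filterlim_at_top)
    moreover have "\<forall>\<^sub>F x in at_left 1. x \<in> {y<..<1}" using eventually_at_left_real[OF y(2)] .
    ultimately show "\<forall>\<^sub>F x in at_left 1. dist (D x) 0 < \<epsilon>"
    proof eventually_elim
      case (elim x)
      then have x: "y < x" "x < 1" "C + 1 \<le> B x" by auto
      have Bx: "B x > 0" using Bpos x y \<kappa> by auto
      have By: "B y > 0" using Bpos x y \<kappa> by auto
      have Bky: "B \<kappa> \<le> B y" using Bmono[of \<kappa> y] y \<kappa> by auto
      have Byx: "B y \<le> B x" using Bmono[of y x] y x \<kappa> by auto
      have hi1: "((\<lambda>z. M * deriv B z) has_integral M * (B y - B \<kappa>)) {\<kappa>..y}"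
        using BintK[of \<kappa> y M] y \<kappa> by linarith
      have hi2: "((\<lambda>z. \<epsilon> / 2 * deriv B z) has_integral \<epsilon> / 2 * (B x - B y)) {y..x}"
        using BintK[of y x "\<epsilon> / 2"] y x \<kappa> by linarith
      have ib: "\<bar>integral {\<kappa>..x} (F x)\<bar> \<le> M * (B y - B \<kappa>) + \<epsilon> / 2 * (B x - B y)"
      proof (cases "F x integrable_on {\<kappa>..x}")
        case False
        then show ?thesis using M(1) e Bky Byx by (simp add: not_integrable_integral)
      next
        case True
        have comb: "integral {\<kappa>..y} (F x) + integral {y..x} (F x) = integral {\<kappa>..x} (F x)"
          using Henstock_Kurzweil_Integration.integral_combine[OF _ _ True, of y] y x by auto
        have i1: "\<bar>integral {\<kappa>..y} (F x)\<bar> \<le> M * (B y - B \<kappa>)"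
        proof -
          have "norm (integral {\<kappa>..y} (F x)) \<le> integral {\<kappa>..y} (\<lambda>z. M * deriv B z)"
          proof (rule integral_norm_bound_integral)
            show "F x integrable_on {\<kappa>..y}"
              using integrable_subinterval_real[OF True, of \<kappa> y] y x by auto
            show "(\<lambda>z. M * deriv B z) integrable_on {\<kappa>..y}"
              using hi1 by (rule has_integral_integrable)
            fix z assume z: "z \<in> {\<kappa>..y}"
            show "norm (F x z) \<le> M * deriv B z"
              using pw[of z x M] M(2) z x y by (simp add: mult.commute)
          qed
          also have "\<dots> = M * (B y - B \<kappa>)"
            using hi1 by (rule integral_unique)
          finally show ?thesis by simp
        qed
        have i2: "\<bar>integral {y..x} (F x)\<bar> \<le> \<epsilon> / 2 * (B x - B y)"
        proof -
          have "norm (integral {y..x} (F x)) \<le> integral {y..x} (\<lambda>z. \<epsilon> / 2 * deriv B z)"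
          proof (rule integral_norm_bound_integral)
            show "F x integrable_on {y..x}"
              using integrable_subinterval_real[OF True, of y x] y x by auto
            show "(\<lambda>z. \<epsilon> / 2 * deriv B z) integrable_on {y..x}"
              using hi2 by (rule has_integral_integrable)
            fix z assume z: "z \<in> {y..x}"
            show "norm (F x z) \<le> \<epsilon> / 2 * deriv B z"
              using pw[of z x "\<epsilon> / 2"] G2y z x y by (simp add: mult.commute)
          qed
          also have "\<dots> = \<epsilon> / 2 * (B x - B y)"
            using hi2 by (rule integral_unique)
          finally show ?thesis by simp
        qed
        show ?thesis using comb i1 i2 abs_triangle_ineq[of "integral {\<kappa>..y} (F x)" "integral {y..x} (F x)"]
          by linarith
      qed
      have "\<bar>D x\<bar> = \<bar>integral {\<kappa>..x} (F x)\<bar> / B x"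
        using DF[of x] x y Bx by (simp add: abs_mult)
      also have "\<dots> \<le> (M * (B y - B \<kappa>) + \<epsilon> / 2 * (B x - B y)) / B x"
        using ib Bx by (simp add: divide_right_mono)
      also have "\<dots> < \<epsilon>"
      proof -
        have "M * (B y - B \<kappa>) = \<epsilon> / 2 * C" using e by (simp add: C_def)
        also have "\<dots> < \<epsilon> / 2 * B x" using x e by simp
        finally have lt: "M * (B y - B \<kappa>) < \<epsilon> / 2 * B x" .
        have "\<epsilon> / 2 * (B x - B y) \<le> \<epsilon> / 2 * B x" using By e by simp
        then have "M * (B y - B \<kappa>) + \<epsilon> / 2 * (B x - B y) < \<epsilon> * B x" using lt by linarith
        then show ?thesis using Bx by (simp add: divide_less_eq)
      qed
      finally show ?case by (simp add: dist_real_def)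
    qed
  qed
qed

end
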